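(* For any value $\gamma \in (0,1]$, the set function $\mathbf{S} \mapsto G(\mathbf{S},\gamma)$, defined on sub-multisets $\mathbf{S}\subseteq\mathbf{W}$ by $$G(\mathbf{S},\gamma) = \sum_{f\in\mathbf{F}}\sum_{t\in\mathrm{dom}(\mathbf{W},f)} d(t)\cdot\log\left(\frac{m_{\mathbf{S}}(t,f)+\gamma}{\gamma}\right),$$ is non-negative, monotone and submodular.
   Context: A workload $\mathbf{W}$ is a finite multiset of queries; $\mathbf{S}\subseteq\mathbf{W}$ ranges over sub-multisets. There is a finite set $\mathbf{F}$ of features; for each query $q$ and feature $f$, $f(q)$ is a finite multiset of tokens; $f(\mathbf{S}) = \biguplus_{q\in\mathbf{S}} f(q)$, $\mathrm{dom}(\mathbf{W},f)$ is the set of distinct tokens in $f(\mathbf{W})$, and $m_{\mathbf{S}}(t,f)$ is the multiplicity of token $t$ in $f(\mathbf{S})$. $d$ is a target probability distribution on the tokens $\{(f,t): t\in\mathrm{dom}(\mathbf{W},f)\}$. Monotone: $A\subseteq B\Rightarrow G(A)\le G(B)$; submodular: $G(A\cup\{q\})-G(A)\ge G(B\cup\{q\})-G(B)$ for $A\subseteq B$. *)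

theory Defs
  imports "HOL-Library.Multiset" Complex_Main
begin

definition feat_ms :: "('f \<Rightarrow> 'q \<Rightarrow> 't multiset) \<Rightarrow> 'f \<Rightarrow> 'q multiset \<Rightarrow> 't multiset" where
  "feat_ms feat f S = sum_mset (image_mset (feat f) S)"

definition tok_dom :: "('f \<Rightarrow> 'q \<Rightarrow> 't multiset) \<Rightarrow> 'q multiset \<Rightarrow> 'f \<Rightarrow> 't set" where
  "tok_dom feat W f = set_mset (feat_ms feat f W)"

definition mult_tok :: "('f \<Rightarrow> 'q \<Rightarrow> 't multiset) \<Rightarrow> 'q multiset \<Rightarrow> 't \<Rightarrow> 'f \<Rightarrow> nat" where
  "mult_tok feat S t f = count (feat_ms feat f S) t"

definition is_token_distribution ::
  "'f set \<Rightarrow> ('f \<Rightarrow> 'q \<Rightarrow> 't multiset) \<Rightarrow> 'q multiset \<Rightarrow> ('f \<times> 't \<Rightarrow> real) \<Rightarrow> bool" where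
  "is_token_distribution F feat W d \<longleftrightarrow>
     (\<forall>f\<in>F. \<forall>t\<in>tok_dom feat W f. d (f, t) \<ge> 0) \<and>
     (\<Sum>f\<in>F. \<Sum>t\<in>tok_dom feat W f. d (f, t)) = 1"

definition G_fun ::
  "'f set \<Rightarrow> ('f \<Rightarrow> 'q \<Rightarrow> 't multiset) \<Rightarrow> 'q multiset \<Rightarrow> ('f \<times> 't \<Rightarrow> real) \<Rightarrow> 'q multiset \<Rightarrow> real \<Rightarrow> real" where
  "G_fun F feat W d S \<gamma> =
     (\<Sum>f\<in>F. \<Sum>t\<in>tok_dom feat W f.
        d (f, t) * ln ((real (mult_tok feat S t f) + \<gamma>) / \<gamma>))"

end

theory Submission
  imports Defs
begin

lemma feat_ms_add: "feat_ms feat f (A + B) = feat_ms feat f A + feat_ms feat f B"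
  by (simp add: feat_ms_def)

lemma mult_tok_add1: "mult_tok feat (A + {#q#}) t f = mult_tok feat A t f + count (feat f q) t"
  by (simp add: mult_tok_def feat_ms_add) (simp add: feat_ms_def)

lemma mult_tok_mono: "A \<subseteq># B \<Longrightarrow> mult_tok feat A t f \<le> mult_tok feat B t f"
proof -
  assume "A \<subseteq># B"
  then have "B = A + (B - A)" by (simp add: subset_mset.add_diff_inverse)
  then have "mult_tok feat B t f = mult_tok feat A t f + mult_tok feat (B - A) t f"
    by (metis count_union feat_ms_add mult_tok_def)
  then show ?thesis by simp
qed

lemma ln_term_mono:
  fixes g :: real assumes "0 < g" "a \<le> b"
  shows "ln ((real a + g)/g) \<le> ln ((real b + g)/g)"
  using assms by (simp add: divide_right_mono)

lemma ln_nonneg_term: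
  fixes g :: real assumes "0 < g"
  shows "0 \<le> ln ((real a + g)/g)"
  using assms by simp

lemma divcanc: "(g::real) \<noteq> 0 \<Longrightarrow> (x/g)/(y/g) = x/y"
  by (metis divide_divide_eq_left' divide_divide_eq_right nonzero_mult_div_cancel_left times_divide_eq_right)

lemma ln_submod:
  fixes g :: real assumes g: "0 < g" and ab: "a \<le> b"
  shows "ln ((real (b + c) + g)/g) - ln ((real b + g)/g) \<le> ln ((real (a + c) + g)/g) - ln ((real a + g)/g)"
proof -
  have p: "\<And>n::nat. 0 < real n + g" using g by (metis add_nonneg_pos of_nat_0_le_iff)
  have e: "\<And>n::nat. ln ((real (n + c) + g)/g) - ln ((real n + g)/g) = ln (1 + real c / (real n + g))"
  proof -
    fix n :: nat
    have "ln ((real (n + c) + g)/g) - ln ((real n + g)/g) = ln (((real (n + c) + g)/g) / ((real n + g)/g))"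
      using p[of n] p[of "n+c"] g by (simp add: ln_div)
    also have "((real (n + c) + g)/g) / ((real n + g)/g) = 1 + real c / (real n + g)"
    proof -
      have "real n + g \<noteq> 0" "g \<noteq> 0" using p[of n] g by auto
      then have "((real (n + c) + g)/g) / ((real n + g)/g) = (real n + g + real c) / (real n + g)"
        using divcanc[of g "real (n + c) + g" "real n + g"] by (simp add: algebra_simps)
      also have "\<dots> = 1 + real c / (real n + g)"
        using \<open>real n + g \<noteq> 0\<close> by (simp add: add_divide_distrib)
      finally show ?thesis .
    qed
    finally show "ln ((real (n + c) + g)/g) - ln ((real n + g)/g) = ln (1 + real c / (real n + g))" .
  qed
  have "real c / (real b + g) \<le> real c / (real a + g)"
    using p[of a] ab by (intro divide_left_mono) auto
  moreover have "0 \<le> real c / (real b + g)" using p[of b] by simp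
  ultimately show ?thesis unfolding e by simp
qed

theorem proposition5p1:
  fixes F :: "'f set" and feat :: "'f \<Rightarrow> 'q \<Rightarrow> 't multiset"
    and W :: "'q multiset" and d :: "'f \<times> 't \<Rightarrow> real" and \<gamma> :: real
  assumes "finite F"
    and "is_token_distribution F feat W d"
    and "0 < \<gamma>" and "\<gamma> \<le> 1"
  shows "(\<forall>S. S \<subseteq># W \<longrightarrow> 0 \<le> G_fun F feat W d S \<gamma>)
    \<and> (\<forall>A B. A \<subseteq># B \<and> B \<subseteq># W \<longrightarrow> G_fun F feat W d A \<gamma> \<le> G_fun F feat W d B \<gamma>)
    \<and> (\<forall>A B q. A \<subseteq># B \<and> B + {#q#} \<subseteq># W \<longrightarrow>
          G_fun F feat W d (A + {#q#}) \<gamma> - G_fun F feat W d A \<gamma>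
            \<ge> G_fun F feat W d (B + {#q#}) \<gamma> - G_fun F feat W d B \<gamma>)"
proof (intro conjI allI impI)
  have dn: "\<And>f t. f \<in> F \<Longrightarrow> t \<in> tok_dom feat W f \<Longrightarrow> 0 \<le> d (f, t)"
    using assms(2) unfolding is_token_distribution_def by blast
  fix S assume "S \<subseteq># W"
  show "0 \<le> G_fun F feat W d S \<gamma>"
    unfolding G_fun_def
    by (intro sum_nonneg mult_nonneg_nonneg dn ln_nonneg_term assms(3)) auto
next
  have dn: "\<And>f t. f \<in> F \<Longrightarrow> t \<in> tok_dom feat W f \<Longrightarrow> 0 \<le> d (f, t)"
    using assms(2) unfolding is_token_distribution_def by blast
  fix A B assume h: "A \<subseteq># B \<and> B \<subseteq># W"
  show "G_fun F feat W d A \<gamma> \<le> G_fun F feat W d B \<gamma>"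
    unfolding G_fun_def
    by (intro sum_mono mult_left_mono dn ln_term_mono assms(3) mult_tok_mono) (use h in auto)
next
  have dn: "\<And>f t. f \<in> F \<Longrightarrow> t \<in> tok_dom feat W f \<Longrightarrow> 0 \<le> d (f, t)"
    using assms(2) unfolding is_token_distribution_def by blast
  fix A B q assume h: "A \<subseteq># B \<and> B + {#q#} \<subseteq># W"
  show "G_fun F feat W d (A + {#q#}) \<gamma> - G_fun F feat W d A \<gamma>
            \<ge> G_fun F feat W d (B + {#q#}) \<gamma> - G_fun F feat W d B \<gamma>"
    unfolding G_fun_def sum_subtractf[symmetric] right_diff_distrib[symmetric] mult_tok_add1
    by (intro sum_mono mult_left_mono dn ln_submod assms(3) mult_tok_mono) (use h in auto)
qed

end
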